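(* Let $P:\mathbb{R}^d\to\mathbb{R}$ be a non-constant homogeneous polynomial of degree $k$, let $p=P|_{\mathbb{S}^{d-1}}$, and let $y_0\in\mathbb{S}^{d-1}$ be a critical point of $p$. Let $\partial^2P(y_0)=[\partial^2_{ij}P(y_0)]$ be the Euclidean Hessian matrix of $P$ at $y_0$ and $D^2p(y_0)$ the Hessian of $p$ at $y_0$, a symmetric bilinear form on $T_{y_0}\mathbb{S}^{d-1}$. If $\mathrm{tr}\,\partial^2P(y_0)\le k(k+d-2)P(y_0)$ and $D^2p(y_0)$ does not vanish as a bilinear form on $T_{y_0}\mathbb{S}^{d-1}$, then there exists $z\in T_{y_0}\mathbb{S}^{d-1}$ with $D^2p(y_0)(z,z)<0$.
   Context: $\mathbb{S}^{d-1}\subset\mathbb{R}^d$ is the Euclidean unit sphere with the induced metric. *)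

theory Defs
  imports "HOL-Analysis.Analysis"
begin

definition hom_poly :: "nat \<Rightarrow> (real^'n \<Rightarrow> real) \<Rightarrow> bool" where
  "hom_poly k P \<longleftrightarrow> (\<exists>(A :: ('n \<Rightarrow> nat) set) (c :: ('n \<Rightarrow> nat) \<Rightarrow> real).
      finite A \<and> (\<forall>\<alpha>\<in>A. (\<Sum>i\<in>UNIV. \<alpha> i) = k) \<and>
      P = (\<lambda>x. \<Sum>\<alpha>\<in>A. c \<alpha> * (\<Prod>i\<in>UNIV. (x $ i) ^ (\<alpha> i))))"

text \<open>Unit-speed-scaled great circle geodesic of the unit sphere through y with velocity z
  (z tangent at y): gamma(0) = y, gamma'(0) = z.\<close>
definition sph_geod :: "real^'n \<Rightarrow> real^'n \<Rightarrow> real \<Rightarrow> real^'n" where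
  "sph_geod y z t = cos (norm z * t) *\<^sub>R y + (sin (norm z * t) / norm z) *\<^sub>R z"

text \<open>Critical point of p = P restricted to the sphere: dp(y)(z) = (p o gamma)'(0) = 0.\<close>
definition sph_critical :: "(real^'n \<Rightarrow> real) \<Rightarrow> real^'n \<Rightarrow> bool" where
  "sph_critical P y \<longleftrightarrow> norm y = 1 \<and>
     (\<forall>z. z \<bullet> y = 0 \<longrightarrow> deriv (\<lambda>t. P (sph_geod y z t)) 0 = 0)"

text \<open>Riemannian Hessian quadratic form of p at y: D^2 p(y)(z,z) = (p o gamma)''(0),
  gamma the geodesic with gamma'(0) = z; bilinear form by polarization.\<close>
definition sph_hess_quad :: "(real^'n \<Rightarrow> real) \<Rightarrow> real^'n \<Rightarrow> real^'n \<Rightarrow> real" where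
  "sph_hess_quad P y z = deriv (deriv (\<lambda>t. P (sph_geod y z t))) 0"

definition sph_hess :: "(real^'n \<Rightarrow> real) \<Rightarrow> real^'n \<Rightarrow> real^'n \<Rightarrow> real^'n \<Rightarrow> real" where
  "sph_hess P y z w = (sph_hess_quad P y (z + w) - sph_hess_quad P y z - sph_hess_quad P y w) / 2"

definition eucl_hess_trace :: "(real^'n \<Rightarrow> real) \<Rightarrow> real^'n \<Rightarrow> real" where
  "eucl_hess_trace P y = (\<Sum>i\<in>UNIV. deriv (deriv (\<lambda>t. P (y + t *\<^sub>R axis i 1))) 0)"

end

theory Submission
  imports Defs
begin

inductive_set polyfun :: "(real^'n \<Rightarrow> real) set" where
  pf_const: "(\<lambda>x. c) \<in> polyfun"
| pf_coord: "(\<lambda>x. x$i) \<in> polyfun"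
| pf_add: "f \<in> polyfun \<Longrightarrow> g \<in> polyfun \<Longrightarrow> (\<lambda>x. f x + g x) \<in> polyfun"
| pf_mult: "f \<in> polyfun \<Longrightarrow> g \<in> polyfun \<Longrightarrow> (\<lambda>x. f x * g x) \<in> polyfun"

lemma pf_deriv:
  assumes "f \<in> polyfun"
  shows "\<exists>f'. (\<forall>x. (f has_derivative f' x) (at x)) \<and> (\<forall>v. (\<lambda>x. f' x v) \<in> polyfun)"
  using assms
proof induction
  case (pf_const c)
  show ?case
    by (rule exI[of _ "\<lambda>x v. 0"]) (auto intro: polyfun.intros)
next
  case (pf_coord i)
  show ?case
    apply (rule exI[of _ "\<lambda>x v. v$i"])
    apply (auto intro: polyfun.intros bounded_linear_vec_nth bounded_linear_imp_has_derivative)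
    done
next
  case (pf_add f g)
  then obtain f' g' where f': "\<forall>x. (f has_derivative f' x) (at x)" "\<forall>v. (\<lambda>x. f' x v) \<in> polyfun"
    and g': "\<forall>x. (g has_derivative g' x) (at x)" "\<forall>v. (\<lambda>x. g' x v) \<in> polyfun" by blast
  show ?case
    apply (rule exI[of _ "\<lambda>x v. f' x v + g' x v"])
    using f' g' by (auto intro: polyfun.intros has_derivative_add)
next
  case (pf_mult f g)
  then obtain f' g' where f': "\<forall>x. (f has_derivative f' x) (at x)" "\<forall>v. (\<lambda>x. f' x v) \<in> polyfun"
    and g': "\<forall>x. (g has_derivative g' x) (at x)" "\<forall>v. (\<lambda>x. g' x v) \<in> polyfun" by blast
  show ?case
    apply (rule exI[of _ "\<lambda>x v. f x * g' x v + f' x v * g x"])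
    using f' g' pf_mult.hyps
    by (auto intro!: pf_add has_derivative_mult polyfun.pf_mult)
qed

lemma pf_sum: "finite A \<Longrightarrow> (\<forall>a\<in>A. f a \<in> polyfun) \<Longrightarrow> (\<lambda>x. \<Sum>a\<in>A. f a x) \<in> polyfun"
proof (induction A rule: finite_induct)
  case empty then show ?case using pf_const[of 0] by simp
next
  case (insert a A) then show ?case using pf_add[of "f a" "\<lambda>x. \<Sum>a\<in>A. f a x"] by simp
qed

lemma pf_prod: "finite A \<Longrightarrow> (\<forall>a\<in>A. f a \<in> polyfun) \<Longrightarrow> (\<lambda>x. \<Prod>a\<in>A. f a x) \<in> polyfun"
proof (induction A rule: finite_induct)
  case empty then show ?case using pf_const[of 1] by simp
next
  case (insert a A) then show ?case using pf_mult[of "f a" "\<lambda>x. \<Prod>a\<in>A. f a x"] by simp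
qed

lemma pf_power: "f \<in> polyfun \<Longrightarrow> (\<lambda>x. f x ^ n) \<in> polyfun"
proof (induction n)
  case 0 then show ?case using pf_const[of 1] by simp
next
  case (Suc n) then show ?case using pf_mult[of f "\<lambda>x. f x ^ n"] by simp
qed

lemma hom_polyfun: "hom_poly k P \<Longrightarrow> P \<in> polyfun"
  unfolding hom_poly_def
  apply clarify
  apply (rule pf_sum, simp)
  apply (intro ballI pf_mult pf_const pf_prod pf_power pf_coord)
  by auto

lemma hom_scale: "hom_poly k P \<Longrightarrow> P (t *\<^sub>R x) = t ^ k * P x"
  unfolding hom_poly_def
  apply clarify
  apply (simp add: sum_distrib_left power_mult_distrib prod.distrib)
  apply (rule sum.cong, simp)
  by (simp add: power_sum[symmetric])

lemma basis_exp: "(\<Sum>i\<in>UNIV. (x::real^'n) $ i *\<^sub>R axis i 1) = x"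
  using basis_expansion[of x] by (simp add: scalar_mult_eq_scaleR)

lemma F_lin:
  fixes D1 :: "real^'n \<Rightarrow> real^'n \<Rightarrow> real"
  assumes hD1: "\<forall>x. (P has_derivative D1 x) (at x)"
    and hF: "\<forall>v x. ((\<lambda>x. D1 x v) has_derivative F v x) (at x)"
  shows "linear (\<lambda>u. F u x w)"
proof (rule linearI)
  have lin: "linear (D1 x)" for x using hD1 has_derivative_bounded_linear bounded_linear.linear by blast
  show "F (a + b) x w = F a x w + F b x w" for a b
  proof -
    have e: "(\<lambda>x. D1 x (a + b)) = (\<lambda>x. D1 x a + D1 x b)"
      using lin by (simp add: linear_add)
    have "((\<lambda>x. D1 x (a + b)) has_derivative (\<lambda>w. F a x w + F b x w)) (at x)"
      unfolding e using hF by (auto intro: has_derivative_add)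
    then have "F (a+b) x = (\<lambda>w. F a x w + F b x w)" using hF has_derivative_unique by blast
    then show ?thesis by simp
  qed
  show "F (r *\<^sub>R a) x w = r *\<^sub>R F a x w" for r a
  proof -
    have e: "(\<lambda>x. D1 x (r *\<^sub>R a)) = (\<lambda>x. r * D1 x a)"
      using lin by (simp add: linear_scale)
    have "((\<lambda>x. D1 x (r *\<^sub>R a)) has_derivative (\<lambda>w. r * F a x w)) (at x)"
      unfolding e using hF by (auto intro: has_derivative_mult_right)
    then have "F (r *\<^sub>R a) x = (\<lambda>w. r * F a x w)" using hF has_derivative_unique by blast
    then show ?thesis by simp
  qed
qed

lemma curve2:
  fixes D1 :: "real^'n \<Rightarrow> real^'n \<Rightarrow> real" and \<gamma> :: "real \<Rightarrow> real^'n"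
  assumes hD1: "\<forall>x. (P has_derivative D1 x) (at x)"
    and hF: "\<forall>v x. ((\<lambda>x. D1 x v) has_derivative F v x) (at x)"
    and g1: "\<forall>t. (\<gamma> has_vector_derivative \<gamma>1 t) (at t)"
    and g2: "\<forall>t. (\<gamma>1 has_vector_derivative \<gamma>2 t) (at t)"
  shows "deriv (deriv (\<lambda>t. P (\<gamma> t))) t0 = F (\<gamma>1 t0) (\<gamma> t0) (\<gamma>1 t0) + D1 (\<gamma> t0) (\<gamma>2 t0)"
proof -
  have lin: "linear (D1 x)" for x using hD1 has_derivative_bounded_linear bounded_linear.linear by blast
  have linF: "linear (F v x)" for v x using hF has_derivative_bounded_linear bounded_linear.linear by blast
  have linF1: "linear (\<lambda>u. F u x w)" for x w using F_lin[OF hD1 hF] .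
  have d1: "((\<lambda>t. P (\<gamma> t)) has_real_derivative D1 (\<gamma> t) (\<gamma>1 t)) (at t)" for t
  proof -
    have "((\<lambda>t. P (\<gamma> t)) has_derivative (\<lambda>h. D1 (\<gamma> t) (h *\<^sub>R \<gamma>1 t))) (at t)"
      using has_derivative_compose[OF g1[rule_format, unfolded has_vector_derivative_def] hD1[rule_format]] .
    moreover have "(\<lambda>h. D1 (\<gamma> t) (h *\<^sub>R \<gamma>1 t)) = (*) (D1 (\<gamma> t) (\<gamma>1 t))"
      using lin by (auto simp: linear_scale)
    ultimately show ?thesis by (simp add: has_field_derivative_def)
  qed
  have dd: "deriv (\<lambda>t. P (\<gamma> t)) = (\<lambda>t. D1 (\<gamma> t) (\<gamma>1 t))"
    using d1 DERIV_imp_deriv by blast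
  have e: "(\<lambda>t. D1 (\<gamma> t) (\<gamma>1 t)) = (\<lambda>t. \<Sum>i\<in>UNIV. \<gamma>1 t $ i * D1 (\<gamma> t) (axis i 1))"
  proof
    fix t
    have "D1 (\<gamma> t) (\<gamma>1 t) = D1 (\<gamma> t) (\<Sum>i\<in>UNIV. \<gamma>1 t $ i *\<^sub>R axis i 1)" by (simp add: basis_exp)
    also have "\<dots> = (\<Sum>i\<in>UNIV. \<gamma>1 t $ i * D1 (\<gamma> t) (axis i 1))"
      using lin by (simp add: linear_sum linear_scale)
    finally show "D1 (\<gamma> t) (\<gamma>1 t) = (\<Sum>i\<in>UNIV. \<gamma>1 t $ i * D1 (\<gamma> t) (axis i 1))" .
  qed
  have "((\<lambda>t. \<Sum>i\<in>UNIV. \<gamma>1 t $ i * D1 (\<gamma> t) (axis i 1)) has_derivative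
     (\<lambda>h. \<Sum>i\<in>UNIV. \<gamma>1 t0 $ i * F (axis i 1) (\<gamma> t0) (h *\<^sub>R \<gamma>1 t0) + (h *\<^sub>R \<gamma>2 t0) $ i * D1 (\<gamma> t0) (axis i 1))) (at t0)"
    apply (rule has_derivative_sum)
    apply (rule has_derivative_mult)
    apply (rule has_derivative_compose[OF g2[rule_format, unfolded has_vector_derivative_def]])
    apply (rule bounded_linear_imp_has_derivative[OF bounded_linear_vec_nth])
    apply (rule has_derivative_compose[OF g1[rule_format, unfolded has_vector_derivative_def]])
    using hF by blast
  moreover have "(\<lambda>h. \<Sum>i\<in>UNIV. \<gamma>1 t0 $ i * F (axis i 1) (\<gamma> t0) (h *\<^sub>R \<gamma>1 t0) + (h *\<^sub>R \<gamma>2 t0) $ i * D1 (\<gamma> t0) (axis i 1))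
     = (*) (F (\<gamma>1 t0) (\<gamma> t0) (\<gamma>1 t0) + D1 (\<gamma> t0) (\<gamma>2 t0))"
  proof
    fix h
    have a: "(\<Sum>i\<in>UNIV. \<gamma>1 t0 $ i * F (axis i 1) (\<gamma> t0) (h *\<^sub>R \<gamma>1 t0)) = F (\<gamma>1 t0) (\<gamma> t0) (h *\<^sub>R \<gamma>1 t0)"
    proof -
      have "F (\<gamma>1 t0) (\<gamma> t0) (h *\<^sub>R \<gamma>1 t0) = F (\<Sum>i\<in>UNIV. \<gamma>1 t0 $ i *\<^sub>R axis i 1) (\<gamma> t0) (h *\<^sub>R \<gamma>1 t0)"
        by (simp add: basis_exp)
      also have "\<dots> = (\<Sum>i\<in>UNIV. \<gamma>1 t0 $ i * F (axis i 1) (\<gamma> t0) (h *\<^sub>R \<gamma>1 t0))"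
        using linF1[of "\<gamma> t0" "h *\<^sub>R \<gamma>1 t0"]
        by (simp add: linear_sum[of "\<lambda>u. F u (\<gamma> t0) (h *\<^sub>R \<gamma>1 t0)"] linear_scale[of "\<lambda>u. F u (\<gamma> t0) (h *\<^sub>R \<gamma>1 t0)"])
      finally show ?thesis by simp
    qed
    have b: "(\<Sum>i\<in>UNIV. (h *\<^sub>R \<gamma>2 t0) $ i * D1 (\<gamma> t0) (axis i 1)) = D1 (\<gamma> t0) (h *\<^sub>R \<gamma>2 t0)"
    proof -
      have "D1 (\<gamma> t0) (h *\<^sub>R \<gamma>2 t0) = D1 (\<gamma> t0) (\<Sum>i\<in>UNIV. (h *\<^sub>R \<gamma>2 t0) $ i *\<^sub>R axis i 1)"
        by (simp only: basis_exp)
      also have "\<dots> = (\<Sum>i\<in>UNIV. (h *\<^sub>R \<gamma>2 t0) $ i * D1 (\<gamma> t0) (axis i 1))"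
        using lin by (simp only: linear_sum linear_scale real_scaleR_def)
      finally show ?thesis by simp
    qed
    show "(\<Sum>i\<in>UNIV. \<gamma>1 t0 $ i * F (axis i 1) (\<gamma> t0) (h *\<^sub>R \<gamma>1 t0) + (h *\<^sub>R \<gamma>2 t0) $ i * D1 (\<gamma> t0) (axis i 1))
       = (F (\<gamma>1 t0) (\<gamma> t0) (\<gamma>1 t0) + D1 (\<gamma> t0) (\<gamma>2 t0)) * h"
      unfolding sum.distrib a b using linF lin by (simp add: linear_scale algebra_simps)
  qed
  ultimately have "((\<lambda>t. D1 (\<gamma> t) (\<gamma>1 t)) has_real_derivative F (\<gamma>1 t0) (\<gamma> t0) (\<gamma>1 t0) + D1 (\<gamma> t0) (\<gamma>2 t0)) (at t0)"
    unfolding e has_field_derivative_def by simp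
  then show ?thesis unfolding dd by (rule DERIV_imp_deriv)
qed

lemma curve1:
  fixes D1 :: "real^'n \<Rightarrow> real^'n \<Rightarrow> real" and \<gamma> :: "real \<Rightarrow> real^'n"
  assumes hD1: "\<forall>x. (P has_derivative D1 x) (at x)"
    and g1: "(\<gamma> has_vector_derivative \<gamma>1) (at t)"
  shows "((\<lambda>t. P (\<gamma> t)) has_real_derivative D1 (\<gamma> t) \<gamma>1) (at t)"
proof -
  have lin: "linear (D1 x)" for x using hD1 has_derivative_bounded_linear bounded_linear.linear by blast
  have "((\<lambda>t. P (\<gamma> t)) has_derivative (\<lambda>h. D1 (\<gamma> t) (h *\<^sub>R \<gamma>1))) (at t)"
    using has_derivative_compose[OF g1[unfolded has_vector_derivative_def] hD1[rule_format]] .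
  moreover have "(\<lambda>h. D1 (\<gamma> t) (h *\<^sub>R \<gamma>1)) = (*) (D1 (\<gamma> t) \<gamma>1)"
    using lin by (auto simp: linear_scale)
  ultimately show ?thesis by (simp add: has_field_derivative_def)
qed

lemma line_d1: "((\<lambda>t. y + t *\<^sub>R (z::real^'n)) has_vector_derivative z) (at t)"
  by (auto intro!: derivative_eq_intros)

lemma line_d2: "((\<lambda>t. (z::real^'n)) has_vector_derivative 0) (at t)"
  by (auto intro!: derivative_eq_intros)

lemma geod_d1: "(sph_geod y z has_vector_derivative
   ((- norm z * sin (norm z * t)) *\<^sub>R y + cos (norm z * t) *\<^sub>R z)) (at t)"
proof (cases "z = 0")
  case True
  then show ?thesis unfolding sph_geod_def by (auto intro!: derivative_eq_intros)
next
  case False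
  then have n: "norm z \<noteq> 0" by simp
  show ?thesis unfolding sph_geod_def[abs_def]
    apply (rule derivative_eq_intros refl)+
    using n by (auto simp: field_simps)
qed

lemma geod_d2: "((\<lambda>t. (- norm z * sin (norm z * t)) *\<^sub>R y + cos (norm z * t) *\<^sub>R (z::real^'n)) has_vector_derivative
   ((- (norm z * norm z) * cos (norm z * t)) *\<^sub>R y + (- norm z * sin (norm z * t)) *\<^sub>R z)) (at t)"
  apply (rule derivative_eq_intros refl)+
  by (auto simp: field_simps power2_eq_square)

lemma psd_aux:
  fixes a b :: real
  assumes "b \<ge> 0" and "\<forall>t. 0 \<le> 2*t*a + t^2*b"
  shows "a = 0"
proof -
  define t where "t = - a / (b+1)"
  have "(b+1)^2 * (2*t*a + t^2*b) = - (a^2) * (b+2)"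
  proof -
    have "b + 1 \<noteq> 0" using assms(1) by linarith
    then have h: "t*(b+1) = -a" unfolding t_def by simp
    have "(b+1)^2 * (2*t*a + t^2*b) = 2*a*(t*(b+1))*(b+1) + (t*(b+1))^2*b"
      by (simp add: algebra_simps power2_eq_square)
    also have "\<dots> = - (a^2) * (b+2)" unfolding h by (simp add: algebra_simps power2_eq_square)
    finally show ?thesis .
  qed
  note eq = this
  have "0 \<le> 2*t*a + t^2*b" using assms(2) by blast
  then have "0 \<le> (b+1)^2 * (2*t*a + t^2*b)" by simp
  then have "0 \<le> - (a^2) * (b+2)" unfolding eq .
  moreover have "0 \<le> a^2 * (b+2)" using assms(1) by simp
  ultimately have "a^2 * (b+2) = 0" by linarith
  moreover have "b + 2 \<noteq> 0" using assms(1) by linarith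
  ultimately show ?thesis by simp
qed

theorem lemma1p11:
  fixes P :: "real^'n \<Rightarrow> real" and k :: nat and y0 :: "real^'n"
  assumes "hom_poly k P"
    and "\<exists>x x'. P x \<noteq> P x'"
    and "norm y0 = 1"
    and "sph_critical P y0"
    and "eucl_hess_trace P y0 \<le> real k * (real k + real CARD('n) - 2) * P y0"
    and "\<exists>z w. z \<bullet> y0 = 0 \<and> w \<bullet> y0 = 0 \<and> sph_hess P y0 z w \<noteq> 0"
  shows "\<exists>z. z \<bullet> y0 = 0 \<and> sph_hess P y0 z z < 0"
proof (rule ccontr)
  assume neg: "\<not> ?thesis"
  have hp: "hom_poly k P" by fact
  obtain D1 where hD1: "\<forall>x. (P has_derivative D1 x) (at x)" and hD1p: "\<forall>v. (\<lambda>x. D1 x v) \<in> polyfun"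
    using pf_deriv[OF hom_polyfun[OF hp]] by blast
  have "\<forall>v. \<exists>G. \<forall>x. ((\<lambda>x. D1 x v) has_derivative G x) (at x)" using pf_deriv hD1p by blast
  then obtain F where hF: "\<forall>v x. ((\<lambda>x. D1 x v) has_derivative F v x) (at x)" by metis
  have lin: "linear (D1 x)" for x using hD1 has_derivative_bounded_linear bounded_linear.linear by blast
  have linF: "linear (F v x)" for v x using hF has_derivative_bounded_linear bounded_linear.linear by blast
  have linF1: "linear (\<lambda>u. F u x w)" for x w using F_lin[OF hD1 hF] .
  have yy: "y0 \<bullet> y0 = 1" using assms(3) by (simp add: norm_eq_1)
  have quad: "sph_hess_quad P y0 z = F z y0 z - (z \<bullet> z) * D1 y0 y0" for z
  proof -
    have "sph_hess_quad P y0 z = F ((- norm z * sin (norm z * 0)) *\<^sub>R y0 + cos (norm z * 0) *\<^sub>R z) (sph_geod y0 z 0)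
        ((- norm z * sin (norm z * 0)) *\<^sub>R y0 + cos (norm z * 0) *\<^sub>R z) +
      D1 (sph_geod y0 z 0) ((- (norm z * norm z) * cos (norm z * 0)) *\<^sub>R y0 + (- norm z * sin (norm z * 0)) *\<^sub>R z)"
      unfolding sph_hess_quad_def
      by (rule curve2[OF hD1 hF allI[OF geod_d1] allI[OF geod_d2]])
    also have "\<dots> = F z y0 z + D1 y0 ((- (norm z * norm z)) *\<^sub>R y0)"
      by (simp add: sph_geod_def)
    also have "\<dots> = F z y0 z - (z \<bullet> z) * D1 y0 y0"
      using lin by (simp add: linear_scale linear_neg power2_norm_eq_inner[symmetric] power2_eq_square)
    finally show ?thesis .
  qed
  have lineq: "(\<lambda>t. P (y0 + t *\<^sub>R y0)) = (\<lambda>t. (1+t)^k * P y0)"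
  proof
    fix t
    have "y0 + t *\<^sub>R y0 = (1+t) *\<^sub>R y0" by (simp add: algebra_simps)
    then show "P (y0 + t *\<^sub>R y0) = (1+t)^k * P y0" using hom_scale[OF hp] by simp
  qed
  have euler: "D1 y0 y0 = k * P y0"
  proof -
    have "((\<lambda>t. P (y0 + t *\<^sub>R y0)) has_real_derivative D1 (y0 + 0 *\<^sub>R y0) y0) (at 0)"
      by (rule curve1[OF hD1 line_d1])
    moreover have "((\<lambda>t. (1+t)^k * P y0) has_real_derivative k * P y0) (at 0)"
      by (auto intro!: derivative_eq_intros)
    ultimately show ?thesis unfolding lineq using DERIV_unique by fastforce
  qed
  have Fyyy: "F y0 y0 y0 = real k * (real k - 1) * P y0"
  proof -
    have "deriv (deriv (\<lambda>t. P (y0 + t *\<^sub>R y0))) 0 = F y0 (y0 + 0 *\<^sub>R y0) y0 + D1 (y0 + 0 *\<^sub>R y0) 0"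
      by (rule curve2[OF hD1 hF]) (rule allI line_d1 line_d2)+
    then have "F y0 y0 y0 = deriv (deriv (\<lambda>t. (1+t)^k * P y0)) 0"
      using lin by (simp add: lineq linear_0)
    also have "deriv (\<lambda>t. (1+t)^k * P y0) = (\<lambda>t. real k * (1+t)^(k-1) * P y0)"
    proof
      fix t :: real
      show "deriv (\<lambda>t. (1+t)^k * P y0) t = real k * (1+t)^(k-1) * P y0"
        by (rule DERIV_imp_deriv) (auto intro!: derivative_eq_intros)
    qed
    also have "deriv (\<lambda>t. real k * (1+t)^(k-1) * P y0) 0 = real k * real (k-1) * P y0"
      by (rule DERIV_imp_deriv) (auto intro!: derivative_eq_intros)
    also have "real k * real (k-1) * P y0 = real k * (real k - 1) * P y0"
      by (cases k) auto
    finally show ?thesis .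
  qed
  have trace: "eucl_hess_trace P y0 = (\<Sum>i\<in>UNIV. F (axis i 1) y0 (axis i 1))"
    unfolding eucl_hess_trace_def
  proof (rule sum.cong[OF refl])
    fix i
    have "deriv (deriv (\<lambda>t. P (y0 + t *\<^sub>R axis i 1))) 0 = F (axis i 1) (y0 + 0 *\<^sub>R axis i 1) (axis i 1) + D1 (y0 + 0 *\<^sub>R axis i 1) 0"
      by (rule curve2[OF hD1 hF]) (rule allI line_d1 line_d2)+
    then show "deriv (deriv (\<lambda>t. P (y0 + t *\<^sub>R axis i 1))) 0 = F (axis i 1) y0 (axis i 1)"
      using lin by (simp add: linear_0)
  qed
  define c where "c = real k * P y0"
  define S where "S u w = (F u y0 w + F w y0 u)/2 - c * (u \<bullet> w)" for u w
  have Ssym: "S u w = S w u" for u w unfolding S_def by (simp add: inner_commute)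
  have Sl: "linear (\<lambda>u. S u w)" for w
    apply (rule linearI)
    using linear_add[OF linF1] linear_scale[OF linF1] linear_add[OF linF] linear_scale[OF linF]
    by (simp_all add: S_def inner_add_left field_simps)
  have Sr: "linear (S u)" for u
    apply (rule linearI)
    using linear_add[OF linF1] linear_scale[OF linF1] linear_add[OF linF] linear_scale[OF linF]
    by (simp_all add: S_def inner_add_right field_simps)
  have Sladd: "S (a + b) w = S a w + S b w" for a b w using linear_add[OF Sl] .
  have Sradd: "S w (a + b) = S w a + S w b" for a b w using linear_add[OF Sr] .
  have Sldiff: "S (a - b) w = S a w - S b w" for a b w using linear_diff[OF Sl] .
  have Srdiff: "S w (a - b) = S w a - S w b" for a b w using linear_diff[OF Sr] .
  have Slsc: "S (r *\<^sub>R a) w = r * S a w" for r a w using linear_scale[OF Sl] by simp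
  have Srsc: "S w (r *\<^sub>R a) = r * S w a" for r a w using linear_scale[OF Sr] by simp
  have quadS: "sph_hess_quad P y0 z = S z z" for z
    unfolding quad S_def euler c_def by simp
  have hessS: "sph_hess P y0 z w = S z w" for z w
  proof -
    have "S (z+w) (z+w) = S z z + S z w + S w z + S w w"
      unfolding Sladd Sradd by simp
    then show ?thesis unfolding sph_hess_def quadS using Ssym[of w z] by simp
  qed
  have psd: "S z z \<ge> 0" if "z \<bullet> y0 = 0" for z
    using neg that unfolding hessS by (simp add: not_less)
  define pr where "pr x = x - (x \<bullet> y0) *\<^sub>R y0" for x
  have prt: "pr x \<bullet> y0 = 0" for x unfolding pr_def using yy by (simp add: inner_diff_left)
  have Syy: "S y0 y0 = real k * (real k - 1) * P y0 - c"
    unfolding S_def Fyyy using yy by simp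
  have Sexp: "S (pr x) (pr x) = S x x - 2 * (x \<bullet> y0) * S x y0 + (x \<bullet> y0)^2 * S y0 y0" for x
    unfolding pr_def Sldiff Srdiff Slsc Srsc using Ssym[of y0 x]
    by (simp add: algebra_simps power2_eq_square)
  have sum1: "(\<Sum>i\<in>UNIV. S (axis i 1) (axis i 1)) = eucl_hess_trace P y0 - real CARD('n) * c"
    unfolding trace S_def by (simp add: sum_subtractf inner_axis_axis)
  have sum2: "(\<Sum>i\<in>UNIV. (axis i 1 \<bullet> y0) * S (axis i 1) y0) = S y0 y0"
  proof -
    have ax: "axis i 1 \<bullet> y0 = y0 $ i" for i by (simp add: inner_axis')
    have "S (\<Sum>i\<in>UNIV. y0 $ i *\<^sub>R axis i 1) y0 = (\<Sum>i\<in>UNIV. y0 $ i * S (axis i 1) y0)"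
      by (simp only: linear_sum[OF Sl] Slsc)
    then have "(\<Sum>i\<in>UNIV. (axis i 1 \<bullet> y0) * S (axis i 1) y0) = S (\<Sum>i\<in>UNIV. y0 $ i *\<^sub>R axis i 1) y0"
      by (simp only: ax)
    then show ?thesis by (simp add: basis_exp)
  qed
  have sum3: "(\<Sum>i\<in>UNIV. (axis i 1 \<bullet> y0)^2) = 1"
  proof -
    have "(\<Sum>i\<in>UNIV. (axis i 1 \<bullet> y0)^2) = (\<Sum>i\<in>UNIV. y0 $ i * y0 $ i)"
      by (simp add: inner_axis' power2_eq_square)
    also have "\<dots> = y0 \<bullet> y0" by (simp add: inner_vec_def)
    finally show ?thesis using yy by simp
  qed
  have tot: "(\<Sum>i\<in>UNIV. S (pr (axis i 1)) (pr (axis i 1))) = eucl_hess_trace P y0 - real k * (real k + real CARD('n) - 2) * P y0"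
  proof -
    have "(\<Sum>i\<in>UNIV. S (pr (axis i 1)) (pr (axis i 1))) =
      (\<Sum>i\<in>UNIV. S (axis i 1) (axis i 1)) - 2 * (\<Sum>i\<in>UNIV. (axis i 1 \<bullet> y0) * S (axis i 1) y0)
        + (\<Sum>i\<in>UNIV. (axis i 1 \<bullet> y0)^2) * S y0 y0"
      unfolding Sexp by (simp add: sum.distrib sum_subtractf sum_distrib_left sum_distrib_right mult.assoc)
    also have "\<dots> = eucl_hess_trace P y0 - real CARD('n) * c - S y0 y0"
      unfolding sum1 sum2 sum3 by simp
    finally show ?thesis unfolding Syy c_def by (simp add: algebra_simps)
  qed
  have zero: "S (pr (axis i 1)) (pr (axis i 1)) = 0" for i
  proof -
    have "(\<Sum>i\<in>UNIV. S (pr (axis i 1)) (pr (axis i 1))) \<le> 0" using tot assms(5) by simp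
    moreover have nn: "\<forall>i\<in>UNIV. S (pr (axis i 1)) (pr (axis i 1)) \<ge> 0" using psd prt by blast
    ultimately have "(\<Sum>i\<in>UNIV. S (pr (axis i 1)) (pr (axis i 1))) = 0"
      by (meson order_antisym sum_nonneg)
    then show ?thesis using sum_nonneg_eq_0_iff[of UNIV "\<lambda>i. S (pr (axis i 1)) (pr (axis i 1))"] nn
      by auto
  qed
  have orth: "S u w = 0" if "u \<bullet> y0 = 0" "w \<bullet> y0 = 0" "S u u = 0" for u w
  proof -
    have ineq: "0 \<le> 2*t*S u w + t^2*S w w" for t
    proof -
      have "(u + t *\<^sub>R w) \<bullet> y0 = 0" using that by (simp add: inner_add_left)
      then have "0 \<le> S (u + t *\<^sub>R w) (u + t *\<^sub>R w)" by (rule psd)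
      also have "S (u + t *\<^sub>R w) (u + t *\<^sub>R w) = S u u + 2*t*S u w + t^2 * S w w"
        unfolding Sladd Sradd Slsc Srsc using Ssym[of w u]
        by (simp add: algebra_simps power2_eq_square)
      finally show ?thesis using that by simp
    qed
    show ?thesis by (rule psd_aux[OF psd[OF that(2)]]) (use ineq in blast)
  qed
  obtain z w where zw: "z \<bullet> y0 = 0" "w \<bullet> y0 = 0" "S z w \<noteq> 0" using assms(6) unfolding hessS by blast
  have eq: "z = (\<Sum>i\<in>UNIV. z $ i *\<^sub>R pr (axis i 1))"
  proof -
    have "(\<Sum>i\<in>UNIV. z $ i *\<^sub>R pr (axis i 1)) = (\<Sum>i\<in>UNIV. z $ i *\<^sub>R axis i 1) - ((\<Sum>i\<in>UNIV. z $ i *\<^sub>R axis i 1) \<bullet> y0) *\<^sub>R y0"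
      unfolding pr_def by (simp add: scaleR_diff_right sum_subtractf inner_sum_left scaleR_sum_left)
    then show ?thesis using zw(1) by (simp add: basis_exp)
  qed
  have "S z w = S (\<Sum>i\<in>UNIV. z $ i *\<^sub>R pr (axis i 1)) w"
    using eq by (rule arg_cong[where f="\<lambda>u. S u w"])
  also have "\<dots> = (\<Sum>i\<in>UNIV. z $ i * S (pr (axis i 1)) w)"
    by (simp only: linear_sum[OF Sl] Slsc)
  also have "\<dots> = 0" using orth[OF prt zw(2) zero] by simp
  finally show False using zw(3) by simp
qed

end
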